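(* Let $p_1,p_2\in\mathcal{P}_{KZ}$ be transcendental periods with $\deg(p_1)\neq\deg(p_2)$. Then $p_1/p_2$ is a transcendental number.
   Context: $\mathbb{R}_{\mathrm{alg}}=\mathbb{R}\cap\overline{\mathbb{Q}}$. Semialgebraic subsets of $\mathbb{R}^n$ are finite unions of finite intersections of sets $\{f=0\}$, $\{g>0\}$ with $f,g\in\mathbb{R}_{\mathrm{alg}}[T_1,\dots,T_n]$; $\mathcal{SA}^n$ denotes those with nonempty interior. A period is a real number $\int_X (P/Q)(x)\,dx$ (absolutely convergent) with $X\in\mathcal{SA}^n$, $P,Q\in\mathbb{R}_{\mathrm{alg}}[T_1,\dots,T_n]$, $Q$ not identically zero on $X$; $\mathcal{P}_{KZ}$ is the set of periods. For a nonzero period $p$ there exists a positive integer $k$ and a compact $K\in\mathcal{SA}^k$ with $|p|=\mathrm{vol}_k(K)$; $\deg(p)$ is the smallest such $k$, and $\deg(0)=0$. *)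

theory Defs
  imports "HOL-Analysis.Analysis" "HOL-Computational_Algebra.Polynomial"
begin

text \<open>Points of R^n are modelled as functions nat => real, extensional on {..<n}
  (i.e. elements of PiE {..<n} UNIV); Lebesgue measure on R^n is the product
  measure of n copies of lborel.\<close>

definition rspace :: "nat \<Rightarrow> (nat \<Rightarrow> real) set" where
  "rspace n = PiE {..<n} (\<lambda>_. UNIV)"

definition lebn :: "nat \<Rightarrow> (nat \<Rightarrow> real) measure" where
  "lebn n = Pi\<^sub>M {..<n} (\<lambda>_. lborel)"

inductive_set alg_poly :: "nat \<Rightarrow> ((nat \<Rightarrow> real) \<Rightarrow> real) set" for n :: nat where
  const: "algebraic c \<Longrightarrow> (\<lambda>_. c) \<in> alg_poly n"
| var: "i < n \<Longrightarrow> (\<lambda>x. x i) \<in> alg_poly n"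
| add: "f \<in> alg_poly n \<Longrightarrow> g \<in> alg_poly n \<Longrightarrow> (\<lambda>x. f x + g x) \<in> alg_poly n"
| mult: "f \<in> alg_poly n \<Longrightarrow> g \<in> alg_poly n \<Longrightarrow> (\<lambda>x. f x * g x) \<in> alg_poly n"

inductive_set semialg :: "nat \<Rightarrow> (nat \<Rightarrow> real) set set" for n :: nat where
  eq: "f \<in> alg_poly n \<Longrightarrow> {x \<in> rspace n. f x = 0} \<in> semialg n"
| pos: "g \<in> alg_poly n \<Longrightarrow> {x \<in> rspace n. g x > 0} \<in> semialg n"
| un: "A \<in> semialg n \<Longrightarrow> B \<in> semialg n \<Longrightarrow> A \<union> B \<in> semialg n"
| int: "A \<in> semialg n \<Longrightarrow> B \<in> semialg n \<Longrightarrow> A \<inter> B \<in> semialg n"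

definition nonempty_interior :: "nat \<Rightarrow> (nat \<Rightarrow> real) set \<Rightarrow> bool" where
  "nonempty_interior n X \<longleftrightarrow>
     (\<exists>x\<in>X. \<exists>e>0. {y \<in> rspace n. \<forall>i<n. \<bar>y i - x i\<bar> < e} \<subseteq> X)"

definition SA :: "nat \<Rightarrow> (nat \<Rightarrow> real) set set" where
  "SA n = {X \<in> semialg n. nonempty_interior n X}"

definition is_period :: "real \<Rightarrow> bool" where
  "is_period p \<longleftrightarrow>
     (\<exists>n X P Q. 0 < n \<and> X \<in> SA n \<and> P \<in> alg_poly n \<and> Q \<in> alg_poly n \<and>
        (\<exists>x\<in>X. Q x \<noteq> 0) \<and>
        set_integrable (lebn n) X (\<lambda>x. P x / Q x) \<and>
        p = (\<integral>x\<in>X. P x / Q x \<partial>lebn n))"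

definition period_deg :: "real \<Rightarrow> nat" where
  "period_deg p = (if p = 0 then 0 else
     (LEAST k. 0 < k \<and> (\<exists>K \<in> SA k. compact K \<and> \<bar>p\<bar> = measure (lebn k) K)))"

end

theory Submission
  imports Defs
begin

definition Tc :: "real \<Rightarrow> (nat \<Rightarrow> real) \<Rightarrow> (nat \<Rightarrow> real)" where
  "Tc c x = x(0 := x 0 / c)"

definition Sc :: "real \<Rightarrow> (nat \<Rightarrow> real) \<Rightarrow> (nat \<Rightarrow> real)" where
  "Sc c x = x(0 := c * x 0)"

lemma Tc_rspace: "0 < k \<Longrightarrow> x \<in> rspace k \<Longrightarrow> Tc c x \<in> rspace k"
  by (auto simp: Tc_def rspace_def PiE_def extensional_def)

lemma Sc_rspace: "0 < k \<Longrightarrow> x \<in> rspace k \<Longrightarrow> Sc c x \<in> rspace k"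
  by (auto simp: Sc_def rspace_def PiE_def extensional_def)

lemma poly_sub:
  assumes "f \<in> alg_poly k" "algebraic c" "c \<noteq> 0"
  shows "(\<lambda>x. f (Tc c x)) \<in> alg_poly k"
  using assms(1)
proof induction
  case (const a)
  then show ?case by (simp add: alg_poly.const)
next
  case (var i)
  show ?case
  proof (cases "i = 0")
    case True
    have "algebraic (inverse c)" using assms by auto
    then have "(\<lambda>x. (\<lambda>_. inverse c) x * (\<lambda>x. x 0) x) \<in> alg_poly k"
      using var True by (intro alg_poly.mult alg_poly.const alg_poly.var) auto
    moreover have "(\<lambda>x. (Tc c x) i) = (\<lambda>x. (\<lambda>_. inverse c) x * (\<lambda>x. x 0) x)"
      using True by (auto simp: Tc_def field_simps)
    ultimately show ?thesis by simp
  next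
    case False
    then have "(\<lambda>x. (Tc c x) i) = (\<lambda>x. x i)" by (auto simp: Tc_def)
    then show ?thesis using var by (simp add: alg_poly.var)
  qed
next
  case (add f g)
  then show ?case by (simp add: alg_poly.add)
next
  case (mult f g)
  then show ?case by (simp add: alg_poly.mult)
qed

lemma semialg_sub:
  assumes "A \<in> semialg k" "algebraic c" "c \<noteq> 0" "0 < k"
  shows "{x \<in> rspace k. Tc c x \<in> A} \<in> semialg k"
  using assms(1)
proof induction
  case (eq f)
  have "{x \<in> rspace k. Tc c x \<in> {x \<in> rspace k. f x = 0}} = {x \<in> rspace k. f (Tc c x) = 0}"
    using Tc_rspace[OF assms(4)] by auto
  then show ?case using semialg.eq[OF poly_sub[OF eq assms(2,3)]] by simp
next
  case (pos g)
  have "{x \<in> rspace k. Tc c x \<in> {x \<in> rspace k. g x > 0}} = {x \<in> rspace k. g (Tc c x) > 0}"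
    using Tc_rspace[OF assms(4)] by auto
  then show ?case using semialg.pos[OF poly_sub[OF pos assms(2,3)]] by simp
next
  case (un A B)
  have "{x \<in> rspace k. Tc c x \<in> A \<union> B} = {x \<in> rspace k. Tc c x \<in> A} \<union> {x \<in> rspace k. Tc c x \<in> B}" by auto
  then show ?case using semialg.un[OF un(3,4)] by simp
next
  case (int A B)
  have "{x \<in> rspace k. Tc c x \<in> A \<inter> B} = {x \<in> rspace k. Tc c x \<in> A} \<inter> {x \<in> rspace k. Tc c x \<in> B}" by auto
  then show ?case using semialg.int[OF int(3,4)] by simp
qed

lemma space_lebn: "space (lebn k) = rspace k"
  by (simp add: lebn_def rspace_def space_PiM)

lemma poly_meas: "f \<in> alg_poly k \<Longrightarrow> f \<in> borel_measurable (lebn k)"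
  unfolding lebn_def
proof (induction rule: alg_poly.induct)
  case (var i)
  then have "i \<in> {..<k}" by simp
  then show ?case by measurable
qed auto

lemma semialg_sets: "A \<in> semialg k \<Longrightarrow> A \<in> sets (lebn k)"
proof (induction rule: semialg.induct)
  case (eq f)
  have "{x \<in> rspace k. f x = 0} = {x \<in> space (lebn k). f x = 0}" by (simp add: space_lebn)
  moreover have "{x \<in> space (lebn k). f x = 0} \<in> sets (lebn k)"
    using poly_meas[OF eq] by measurable
  ultimately show ?case by simp
next
  case (pos f)
  have "{x \<in> rspace k. f x > 0} = {x \<in> space (lebn k). f x > 0}" by (simp add: space_lebn)
  moreover have "{x \<in> space (lebn k). f x > 0} \<in> sets (lebn k)"
    using poly_meas[OF pos] by measurable
  ultimately show ?case by simp
qed auto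

lemma semialg_sub_rspace: "A \<in> semialg k \<Longrightarrow> A \<subseteq> rspace k"
  by (induction rule: semialg.induct) auto

lemma lborel_scale:
  assumes "(c::real) > 0" "B \<in> sets lborel"
  shows "emeasure lborel {t. t / c \<in> B} = ennreal c * emeasure lborel B"
proof -
  have "emeasure (distr lborel borel ((*) (1/c))) B = emeasure lborel ((*) (1/c) -` B \<inter> space lborel)"
    using assms by (intro emeasure_distr) auto
  also have "(*) (1/c) -` B \<inter> space lborel = {t. t / c \<in> B}" by auto
  finally have 1: "emeasure lborel {t. t / c \<in> B} = emeasure (distr lborel borel ((*) (1/c))) B" ..
  have "distr lborel borel ((*) (1/c)) = density lborel (\<lambda>_. inverse \<bar>1/c\<bar>)"
    using assms by (intro lborel_distr_mult) auto
  then show ?thesis using 1 assms by (simp add: emeasure_density_const)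
qed

lemma Tc_meas:
  assumes "c \<noteq> 0" "0 < k"
  shows "Tc c \<in> measurable (lebn k) (lebn k)"
proof -
  have "(\<lambda>x i. (if i = 0 then x 0 / c else x i)) \<in> measurable (lebn k) (lebn k)"
    unfolding lebn_def
    by (rule measurable_PiM_single') (use assms in \<open>auto simp: space_PiM PiE_def extensional_def\<close>)
  moreover have "(\<lambda>x i. (if i = 0 then x 0 / c else x i)) = Tc c" by (auto simp: Tc_def fun_eq_iff)
  ultimately show ?thesis by simp
qed

interpretation lb_prod: product_sigma_finite "\<lambda>_::nat. lborel :: real measure"
  by (simp add: product_sigma_finite_def sigma_finite_lborel)

lemma lebn_scale:
  assumes "c > 0" "0 < k"
  shows "scale_measure (ennreal (1/c)) (distr (lebn k) (lebn k) (Tc c)) = lebn k"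
  unfolding lebn_def
proof (rule lb_prod.PiM_eqI)
  fix A :: "nat \<Rightarrow> real set" assume A: "\<And>i. i \<in> {..<k} \<Longrightarrow> A i \<in> sets lborel"
  define A' where "A' = A(0 := {t. t / c \<in> A 0})"
  have A'm: "A' i \<in> sets lborel" if "i \<in> {..<k}" for i
  proof (cases "i = 0")
    case True
    have "A 0 \<in> sets borel" using A assms by auto
    then have "{t. t / c \<in> A 0} \<in> sets borel" by measurable
    then show ?thesis using True by (simp add: A'_def)
  qed (use A that in \<open>auto simp: A'_def\<close>)
  have pre: "Tc c -` PiE {..<k} A \<inter> space (PiM {..<k} (\<lambda>_. lborel)) = PiE {..<k} A'"
    using assms(2) by (auto simp: Tc_def A'_def space_PiM PiE_def extensional_def Pi_def split: if_splits)
  have "emeasure (distr (PiM {..<k} (\<lambda>_. lborel)) (PiM {..<k} (\<lambda>_. lborel)) (Tc c)) (PiE {..<k} A)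
      = emeasure (PiM {..<k} (\<lambda>_. lborel)) (PiE {..<k} A')"
    using Tc_meas[of c k] assms A by (subst emeasure_distr) (auto simp: lebn_def pre)
  also have "\<dots> = (\<Prod>i\<in>{..<k}. emeasure lborel (A' i))"
    using A'm by (intro lb_prod.emeasure_PiM) auto
  also have "\<dots> = emeasure lborel (A' 0) * (\<Prod>i\<in>{..<k} - {0}. emeasure lborel (A' i))"
    using assms by (subst prod.remove[of _ 0]) auto
  also have "(\<Prod>i\<in>{..<k} - {0}. emeasure lborel (A' i)) = (\<Prod>i\<in>{..<k} - {0}. emeasure lborel (A i))"
    by (auto simp: A'_def)
  also have "emeasure lborel (A' 0) = ennreal c * emeasure lborel (A 0)"
    using A assms by (simp add: A'_def lborel_scale)
  finally have *: "emeasure (distr (PiM {..<k} (\<lambda>_. lborel)) (PiM {..<k} (\<lambda>_. lborel)) (Tc c)) (PiE {..<k} A)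
      = ennreal c * (emeasure lborel (A 0) * (\<Prod>i\<in>{..<k} - {0}. emeasure lborel (A i)))"
    by (simp add: mult.assoc)
  have "(\<Prod>i\<in>{..<k}. emeasure lborel (A i)) = emeasure lborel (A 0) * (\<Prod>i\<in>{..<k} - {0}. emeasure lborel (A i))"
    using assms by (subst prod.remove[of _ 0]) auto
  moreover have "ennreal (1/c) * ennreal c = 1" using assms by (simp add: ennreal_mult[symmetric])
  ultimately show "emeasure (scale_measure (ennreal (1/c)) (distr (PiM {..<k} (\<lambda>_. lborel)) (PiM {..<k} (\<lambda>_. lborel)) (Tc c))) (PiE {..<k} A)
      = (\<Prod>i\<in>{..<k}. emeasure lborel (A i))"
    using * by (simp add: mult.assoc[symmetric])
qed auto

lemma emeasure_Tc:
  assumes "c > 0" "0 < k" "A \<in> sets (lebn k)"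
  shows "emeasure (lebn k) {x \<in> rspace k. Tc c x \<in> A} = ennreal c * emeasure (lebn k) A"
proof -
  have "emeasure (lebn k) A = ennreal (1/c) * emeasure (distr (lebn k) (lebn k) (Tc c)) A"
    using lebn_scale[OF assms(1,2)] by (metis emeasure_scale_measure)
  also have "emeasure (distr (lebn k) (lebn k) (Tc c)) A = emeasure (lebn k) (Tc c -` A \<inter> space (lebn k))"
    using Tc_meas[of c k] assms by (intro emeasure_distr) auto
  also have "Tc c -` A \<inter> space (lebn k) = {x \<in> rspace k. Tc c x \<in> A}"
    by (auto simp: space_lebn)
  finally have "ennreal c * emeasure (lebn k) A = ennreal c * ennreal (1/c) * emeasure (lebn k) {x \<in> rspace k. Tc c x \<in> A}"
    by (simp add: mult.assoc)
  also have "ennreal c * ennreal (1/c) = 1" using assms by (simp add: ennreal_mult[symmetric])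
  finally show ?thesis by simp
qed

lemma continuous_Sc: "continuous_on S (Sc c)"
proof (rule continuous_on_coordinatewise_then_product)
  fix i
  show "continuous_on S (\<lambda>x. Sc c x i)"
  proof (cases "i = 0")
    case True
    then show ?thesis by (simp add: Sc_def, intro continuous_intros continuous_on_subset[OF continuous_on_product_coordinates]) auto
  next
    case False
    then show ?thesis by (simp add: Sc_def, intro continuous_on_subset[OF continuous_on_product_coordinates]) auto
  qed
qed

definition Pset :: "real \<Rightarrow> nat \<Rightarrow> bool" where
  "Pset p k \<longleftrightarrow> 0 < k \<and> (\<exists>K \<in> SA k. compact K \<and> \<bar>p\<bar> = measure (lebn k) K)"

lemma Pset_scale:
  assumes "algebraic a" "a \<noteq> 0" "Pset p k"
  shows "Pset (a * p) k"
proof -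
  define c where "c = \<bar>a\<bar>"
  have c: "c > 0" "algebraic c" using assms by (auto simp: c_def)
  from assms(3) obtain K where k: "0 < k" and K: "K \<in> SA k" "compact K" "\<bar>p\<bar> = measure (lebn k) K"
    by (auto simp: Pset_def)
  have Ks: "K \<in> semialg k" and Ki: "nonempty_interior k K" using K by (auto simp: SA_def)
  have Kr: "K \<subseteq> rspace k" using semialg_sub_rspace[OF Ks] .
  define K' where "K' = {x \<in> rspace k. Tc c x \<in> K}"
  have TS: "Tc c (Sc c x) = x" for x using c by (auto simp: Tc_def Sc_def fun_eq_iff)
  have ST: "Sc c (Tc c x) = x" for x using c by (auto simp: Tc_def Sc_def fun_eq_iff)
  have K'S: "K' = Sc c ` K"
  proof
    show "K' \<subseteq> Sc c ` K"
    proof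
      fix y assume "y \<in> K'"
      then have "Tc c y \<in> K" "y = Sc c (Tc c y)" by (auto simp: K'_def ST)
      then show "y \<in> Sc c ` K" by blast
    qed
    show "Sc c ` K \<subseteq> K'"
      using Kr k by (auto simp: K'_def TS Sc_rspace)
  qed
  have "K' \<in> semialg k" unfolding K'_def using semialg_sub[OF Ks c(2) _ k] c by auto
  moreover have "nonempty_interior k K'"
  proof -
    from Ki obtain x e where x: "x \<in> K" "e > 0" and box: "{y \<in> rspace k. \<forall>i<k. \<bar>y i - x i\<bar> < e} \<subseteq> K"
      by (auto simp: nonempty_interior_def)
    define e' where "e' = e * min 1 c"
    have e': "e' > 0" "e' \<le> e" "e' \<le> e * c" using x c by (auto simp: e'_def mult_le_cancel_left1 mult_left_le)
    have "Sc c x \<in> K'" using K'S x by auto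
    moreover have "{y \<in> rspace k. \<forall>i<k. \<bar>y i - Sc c x i\<bar> < e'} \<subseteq> K'"
    proof
      fix y assume y: "y \<in> {y \<in> rspace k. \<forall>i<k. \<bar>y i - Sc c x i\<bar> < e'}"
      have "\<bar>Tc c y i - x i\<bar> < e" if "i < k" for i
      proof (cases "i = 0")
        case True
        have "\<bar>y 0 - c * x 0\<bar> < e'" using y that True by (auto simp: Sc_def)
        then have "\<bar>y 0 - c * x 0\<bar> < e * c" using e' by linarith
        moreover have "\<bar>y 0 / c - x 0\<bar> = \<bar>y 0 - c * x 0\<bar> / c" using c
          by (simp add: field_simps abs_div_pos[symmetric] del: abs_div_pos)
        ultimately show ?thesis using True c by (simp add: Tc_def divide_less_eq)
      next
        case False
        then show ?thesis using y that e' by (auto simp: Tc_def Sc_def)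
      qed
      moreover have "Tc c y \<in> rspace k" using y k Tc_rspace by auto
      ultimately have "Tc c y \<in> K" using box by auto
      then show "y \<in> K'" using y by (auto simp: K'_def)
    qed
    ultimately show ?thesis using e' unfolding nonempty_interior_def by blast
  qed
  ultimately have "K' \<in> SA k" by (simp add: SA_def)
  moreover have "compact K'" unfolding K'S using K(2) by (intro compact_continuous_image continuous_Sc)
  moreover have "\<bar>a * p\<bar> = measure (lebn k) K'"
  proof -
    have "measure (lebn k) K' = enn2real (ennreal c * emeasure (lebn k) K)"
      unfolding measure_def K'_def using emeasure_Tc[OF c(1) k semialg_sets[OF Ks]] by simp
    also have "\<dots> = c * measure (lebn k) K" using c by (simp add: enn2real_mult measure_def)
    finally show ?thesis using K(3) by (simp add: c_def abs_mult)
  qed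
  ultimately show ?thesis using k unfolding Pset_def by blast
qed

theorem mainTheorem9:
  fixes p1 p2 :: real
  assumes "is_period p1" and "is_period p2"
    and "\<not> algebraic p1" and "\<not> algebraic p2"
    and "period_deg p1 \<noteq> period_deg p2"
  shows "\<not> algebraic (p1 / p2)"
proof
  assume alg: "algebraic (p1 / p2)"
  have n1: "p1 \<noteq> 0" and n2: "p2 \<noteq> 0" using assms(3,4) by auto
  have a0: "p1 / p2 \<noteq> 0" using n1 n2 by simp
  have alg': "algebraic (p2 / p1)" using alg by (metis algebraic_inverse inverse_divide)
  have a0': "p2 / p1 \<noteq> 0" using n1 n2 by simp
  have "Pset p1 = Pset p2"
  proof (intro ext iffI)
    fix k assume "Pset p1 k"
    from Pset_scale[OF alg' a0' this] show "Pset p2 k" using n1 by simp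
  next
    fix k assume "Pset p2 k"
    from Pset_scale[OF alg a0 this] show "Pset p1 k" using n2 by simp
  qed
  then have "period_deg p1 = period_deg p2"
    using n1 n2 unfolding period_deg_def Pset_def[abs_def] by (metis (no_types, lifting))
  then show False using assms(5) by simp
qed

end
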